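(* Let $n,m\ge 1$ and let $\mathbf{K}_1,\dots,\mathbf{K}_m\in\mathbb{R}^{n,n}$. For any ordering of these matrices, i.e. any permutation $\pi$ of $\{1,\dots,m\}$, form the product $\mathbf{K}^{\pi}=\mathbf{K}_{\pi(m)}\mathbf{K}_{\pi(m-1)}\cdots\mathbf{K}_{\pi(1)}$, and for a fixed index $i$ define the block sensitivity of $\mathbf{K}_i$ in this product as $\mathrm{BS}_i^{\pi}=\left|\,\left|\frac{\partial\mathbf{K}^{\pi}}{\partial\mathbf{K}_i}\right|\,\right|$ (absolute value of the determinant of the Jacobian of $\mathbf{K}^\pi$ with respect to the factor $\mathbf{K}_i$, others held fixed). Then $\mathrm{BS}_i^{\pi}$ does not depend on $\pi$; that is, the block sensitivity of a factor is determined by the matrices alone and not by the position of $\mathbf{K}_i$ in the product.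
   Context: For $\mathbf{A}=(a_{i,j})\in\mathbb{R}^{p,q}$, $\operatorname{vec}(\mathbf{A})$ is the row-major vectorization $(a_{1,1},\dots,a_{1,q},\dots,a_{p,1},\dots,a_{p,q})^{\mathrm T}$. The Jacobian $\frac{\partial\mathbf{K}^{\pi}}{\partial\mathbf{K}_i}$ is the $n^2\times n^2$ Jacobian matrix of the map $\operatorname{vec}(\mathbf{X})\mapsto\operatorname{vec}(\mathbf{P}\mathbf{X}\mathbf{Q})$, where $\mathbf{P}$ is the product of the factors to the left of $\mathbf{K}_i$ in $\mathbf{K}^\pi$ and $\mathbf{Q}$ the product of the factors to its right (empty products are the identity). $|\cdot|$ denotes the determinant and the outer bars the absolute value. *)

theory Defs
  imports "HOL-Analysis.Analysis"
begin

text \<open>Vectorization of an n x n matrix, indexed by pairs (row, column).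
  The index (a,b) corresponds to position (a-1)n+b in the row-major vectorization.\<close>
definition vecm :: "real^'n^'n \<Rightarrow> real^('n \<times> 'n)" where
  "vecm X = (\<chi> ab. X $ fst ab $ snd ab)"

definition unvecm :: "real^('n \<times> 'n) \<Rightarrow> real^'n^'n" where
  "unvecm v = (\<chi> a b. v $ (a, b))"

fun ordprod :: "(nat \<Rightarrow> real^'n^'n) \<Rightarrow> (nat \<Rightarrow> nat) \<Rightarrow> nat \<Rightarrow> real^'n^'n" where
  "ordprod K \<pi> 0 = mat 1"
| "ordprod K \<pi> (Suc j) = K (\<pi> (Suc j)) ** ordprod K \<pi> j"

definition jacobian :: "(real^'a \<Rightarrow> real^'b) \<Rightarrow> real^'a \<Rightarrow> real^'a^'b" where
  "jacobian f x = matrix (frechet_derivative f (at x))"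

definition block_jacobian ::
  "(nat \<Rightarrow> real^'n^'n) \<Rightarrow> (nat \<Rightarrow> nat) \<Rightarrow> nat \<Rightarrow> nat \<Rightarrow> real^('n\<times>'n)^('n\<times>'n)" where
  "block_jacobian K \<pi> m i =
     jacobian (\<lambda>v. vecm (ordprod (K(i := unvecm v)) \<pi> m)) (vecm (K i))"

definition block_sensitivity ::
  "(nat \<Rightarrow> real^'n^'n) \<Rightarrow> (nat \<Rightarrow> nat) \<Rightarrow> nat \<Rightarrow> nat \<Rightarrow> real" where
  "block_sensitivity K \<pi> m i = \<bar>det (block_jacobian K \<pi> m i)\<bar>"

end

theory Submission
  imports Defs
begin

definition LM :: "real^'n^'n \<Rightarrow> real^('n\<times>'n) \<Rightarrow> real^('n\<times>'n)" where
  "LM A v = vecm (A ** unvecm v)"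
definition RM :: "real^'n^'n \<Rightarrow> real^('n\<times>'n) \<Rightarrow> real^('n\<times>'n)" where
  "RM A v = vecm (unvecm v ** A)"
definition TM :: "real^('n::finite\<times>'n) \<Rightarrow> real^('n\<times>'n)" where
  "TM v = (\<chi> ab. v $ (snd ab, fst ab))"
definition dL :: "real^'n^'n \<Rightarrow> real" where
  "dL A = det (matrix (LM A))"

lemma unvecm_vecm[simp]: "unvecm (vecm X) = X"
  by (simp add: unvecm_def vecm_def vec_eq_iff)
lemma vecm_unvecm[simp]: "vecm (unvecm v) = v"
  by (simp add: unvecm_def vecm_def vec_eq_iff)

lemma linear_LM: "linear (LM A)"
  by (rule linearI) (auto simp: LM_def vecm_def unvecm_def vec_eq_iff matrix_matrix_mult_def
      sum.distrib sum_distrib_left algebra_simps)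
lemma linear_RM: "linear (RM A)"
  by (rule linearI) (auto simp: RM_def vecm_def unvecm_def vec_eq_iff matrix_matrix_mult_def
      sum.distrib sum_distrib_left algebra_simps)
lemma linear_TM: "linear TM"
  by (rule linearI) (auto simp: TM_def vec_eq_iff)

lemma LM_mult: "LM (A ** B) = LM A \<circ> LM B"
  by (auto simp: LM_def matrix_mul_assoc)
lemma RM_mult: "RM (A ** B) = RM B \<circ> RM A"
  by (auto simp: RM_def matrix_mul_assoc)
lemma dL_mult: "dL (A ** B) = dL A * dL B"
  by (simp add: dL_def LM_mult matrix_compose[OF linear_LM linear_LM] det_mul)
lemma dL_1: "dL (mat 1 :: real^'n^'n) = 1"
proof -
  have "LM (mat 1 :: real^'n^'n) = id" by (auto simp: LM_def)
  then show ?thesis by (simp add: dL_def matrix_id_mat_1)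
qed

lemma TT: "TM \<circ> TM = id"
  by (auto simp: TM_def vec_eq_iff)
lemma detT: "det (matrix (TM::real^('n::finite\<times>'n) \<Rightarrow> _)) * det (matrix (TM::real^('n\<times>'n) \<Rightarrow> _)) = 1"
proof -
  have "det (matrix (TM::real^('n::finite\<times>'n) \<Rightarrow> _)) * det (matrix (TM::real^('n\<times>'n) \<Rightarrow> _)) = det (matrix ((TM::real^('n\<times>'n) \<Rightarrow> _) \<circ> TM))"
    by (simp add: matrix_compose[OF linear_TM linear_TM] det_mul)
  then show ?thesis by (simp add: TT matrix_id_mat_1)
qed

lemma RM_TM: "RM A = TM \<circ> LM (transpose A) \<circ> TM"
  by (auto simp: RM_def LM_def TM_def vecm_def unvecm_def vec_eq_iff matrix_matrix_mult_def transpose_def mult.commute)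

lemma LM_entry: "matrix (LM A) $ ab $ cd = A $ fst ab $ fst cd * (if snd ab = snd cd then 1 else 0)"
proof -
  obtain a b c d where e: "ab = (a,b)" "cd = (c,d)" by fastforce
  have "matrix (LM A) $ (a,b) $ (c,d) = (\<Sum>k\<in>UNIV. A $ a $ k * (if k = c \<and> b = d then 1 else 0))"
    by (simp add: matrix_def LM_def vecm_def unvecm_def matrix_matrix_mult_def axis_def)
  also have "... = (\<Sum>k\<in>UNIV. if k = c then A $ a $ k * (if b = d then 1 else 0) else 0)"
    by (rule sum.cong) auto
  also have "... = A $ a $ c * (if b = d then 1 else 0)" by simp
  finally show ?thesis using e by simp
qed

lemma LM_transpose: "matrix (LM (transpose A)) = transpose (matrix (LM A))"
  by (simp add: vec_eq_iff LM_entry transpose_def)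

lemma dR: "det (matrix (RM (A::real^'n^'n))) = dL A"
proof -
  have "det (matrix (RM A)) = det (matrix (TM::real^('n\<times>'n) \<Rightarrow> _)) * (det (matrix (LM (transpose A))) * det (matrix (TM::real^('n\<times>'n) \<Rightarrow> _)))"
    unfolding RM_TM
    by (simp add: matrix_compose linear_compose linear_TM linear_LM det_mul)
  also have "... = det (matrix (LM (transpose A)))"
    using detT[where 'n='n] by (metis mult.commute mult.left_commute mult_1_right)
  also have "... = dL A" by (simp add: LM_transpose dL_def)
  finally show ?thesis .
qed

lemma key:
  fixes K :: "nat \<Rightarrow> real^'n^'n"
  assumes inj: "inj_on \<pi> {1..m}"
  shows "j \<le> m \<Longrightarrow> (i \<notin> \<pi>`{1..j} \<longrightarrow> (\<forall>X. ordprod (K(i:=X)) \<pi> j = ordprod K \<pi> j)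
          \<and> dL (ordprod K \<pi> j) = (\<Prod>l\<in>{1..j}. dL (K (\<pi> l))))
     \<and> (i \<in> \<pi>`{1..j} \<longrightarrow> (\<exists>P Q. (\<forall>X. ordprod (K(i:=X)) \<pi> j = P ** X ** Q)
          \<and> dL P * dL Q = (\<Prod>l\<in>{l\<in>{1..j}. \<pi> l \<noteq> i}. dL (K (\<pi> l)))))"
proof (induction j)
  case 0
  then show ?case by (simp add: dL_1)
next
  case (Suc j)
  have IH: "(i \<notin> \<pi>`{1..j} \<longrightarrow> (\<forall>X. ordprod (K(i:=X)) \<pi> j = ordprod K \<pi> j)
          \<and> dL (ordprod K \<pi> j) = (\<Prod>l\<in>{1..j}. dL (K (\<pi> l))))
     \<and> (i \<in> \<pi>`{1..j} \<longrightarrow> (\<exists>P Q. (\<forall>X. ordprod (K(i:=X)) \<pi> j = P ** X ** Q)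
          \<and> dL P * dL Q = (\<Prod>l\<in>{l\<in>{1..j}. \<pi> l \<noteq> i}. dL (K (\<pi> l)))))"
    using Suc.IH[OF Suc_leD[OF Suc.prems]] .
  have split: "{1..Suc j} = insert (Suc j) {1..j}" by auto
  show ?case
  proof (cases "\<pi> (Suc j) = i")
    case True
    have ni: "i \<notin> \<pi>`{1..j}"
    proof
      assume "i \<in> \<pi>`{1..j}"
      then obtain l where "l \<in> {1..j}" "\<pi> l = \<pi> (Suc j)" using True by auto
      with inj Suc.prems show False by (auto dest: inj_onD)
    qed
    have s2: "{l\<in>{1..Suc j}. \<pi> l \<noteq> i} = {1..j}"
      using ni True by (auto simp: le_Suc_eq image_iff)
    have "\<forall>X. ordprod (K(i:=X)) \<pi> (Suc j) = mat 1 ** X ** ordprod K \<pi> j"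
      using IH ni True by simp
    moreover have "dL (mat 1) * dL (ordprod K \<pi> j) = (\<Prod>l\<in>{l\<in>{1..Suc j}. \<pi> l \<noteq> i}. dL (K (\<pi> l)))"
      using IH ni s2 by (simp add: dL_1)
    moreover have "i \<in> \<pi>`{1..Suc j}" using True by force
    ultimately show ?thesis by blast
  next
    case False
    have im: "(i \<in> \<pi>`{1..Suc j}) = (i \<in> \<pi>`{1..j})" using False split by auto
    have s2: "{l\<in>{1..Suc j}. \<pi> l \<noteq> i} = insert (Suc j) {l\<in>{1..j}. \<pi> l \<noteq> i}"
      using False by auto
    show ?thesis
    proof (cases "i \<in> \<pi>`{1..j}")
      case True
      then obtain P Q where PQ: "\<forall>X. ordprod (K(i:=X)) \<pi> j = P ** X ** Q"
        "dL P * dL Q = (\<Prod>l\<in>{l\<in>{1..j}. \<pi> l \<noteq> i}. dL (K (\<pi> l)))" using IH by blast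
      have "\<forall>X. ordprod (K(i:=X)) \<pi> (Suc j) = (K (\<pi> (Suc j)) ** P) ** X ** Q"
        using PQ False by (simp add: matrix_mul_assoc)
      moreover have "dL (K (\<pi> (Suc j)) ** P) * dL Q = (\<Prod>l\<in>{l\<in>{1..Suc j}. \<pi> l \<noteq> i}. dL (K (\<pi> l)))"
        unfolding s2 using PQ(2) by (simp add: dL_mult)
      ultimately show ?thesis using im True by blast
    next
      case ni: False
      have "\<forall>X. ordprod (K(i:=X)) \<pi> (Suc j) = ordprod K \<pi> (Suc j)"
        using IH ni False by simp
      moreover have "dL (ordprod K \<pi> (Suc j)) = (\<Prod>l\<in>{1..Suc j}. dL (K (\<pi> l)))"
        using IH ni by (simp add: dL_mult split)
      ultimately show ?thesis using im ni by blast
    qed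
  qed
qed

lemma det_block:
  fixes K :: "nat \<Rightarrow> real^'n^'n"
  assumes "i \<in> {1..m}" and p: "\<pi> permutes {1..m}"
  shows "det (block_jacobian K \<pi> m i) = (\<Prod>x\<in>{1..m}-{i}. dL (K x))"
proof -
  have inj: "inj_on \<pi> {1..m}" using p permutes_inj_on by blast
  have im: "\<pi> ` {1..m} = {1..m}" using p permutes_image by blast
  have "i \<in> \<pi>`{1..m}" using im assms(1) by simp
  then obtain P Q where PQ: "\<forall>X. ordprod (K(i:=X)) \<pi> m = P ** X ** Q"
        "dL P * dL Q = (\<Prod>l\<in>{l\<in>{1..m}. \<pi> l \<noteq> i}. dL (K (\<pi> l)))"
    using key[OF inj, of m i K] by auto
  have F: "(\<lambda>v. vecm (ordprod (K(i := unvecm v)) \<pi> m)) = LM P \<circ> RM Q"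
    using PQ(1) by (auto simp: LM_def RM_def matrix_mul_assoc)
  have lin: "linear (LM P \<circ> RM Q)" by (simp add: linear_compose linear_LM linear_RM)
  have "frechet_derivative (LM P \<circ> RM Q) (at (vecm (K i))) = LM P \<circ> RM Q"
    using frechet_derivative_at[OF linear_imp_has_derivative[OF lin]] by simp
  then have "det (block_jacobian K \<pi> m i) = dL P * det (matrix (RM Q))"
    unfolding block_jacobian_def jacobian_def F
    by (simp add: matrix_compose linear_LM linear_RM det_mul dL_def)
  also have "... = (\<Prod>l\<in>{l\<in>{1..m}. \<pi> l \<noteq> i}. dL (K (\<pi> l)))" using PQ(2) by (simp add: dR)
  also have "... = (\<Prod>x\<in>\<pi> ` {l\<in>{1..m}. \<pi> l \<noteq> i}. dL (K x))"
    by (rule prod.reindex[symmetric, unfolded comp_def]) (rule inj_on_subset[OF inj], auto)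
  also have "\<pi> ` {l\<in>{1..m}. \<pi> l \<noteq> i} = {1..m}-{i}"
  proof
    show "\<pi> ` {l\<in>{1..m}. \<pi> l \<noteq> i} \<subseteq> {1..m}-{i}" using im by auto
    show "{1..m}-{i} \<subseteq> \<pi> ` {l\<in>{1..m}. \<pi> l \<noteq> i}"
    proof
      fix x assume x: "x \<in> {1..m}-{i}"
      then have "x \<in> \<pi> ` {1..m}" using im by simp
      then obtain l where "l \<in> {1..m}" "x = \<pi> l" by blast
      then show "x \<in> \<pi> ` {l\<in>{1..m}. \<pi> l \<noteq> i}" using x by auto
    qed
  qed
  finally show ?thesis .
qed

theorem theorem6:
  fixes K :: "nat \<Rightarrow> real^'n^'n" and m i :: nat and \<pi> \<sigma> :: "nat \<Rightarrow> nat"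
  assumes "m \<ge> 1" and "i \<in> {1..m}"
    and "\<pi> permutes {1..m}" and "\<sigma> permutes {1..m}"
  shows "block_sensitivity K \<pi> m i = block_sensitivity K \<sigma> m i"
  unfolding block_sensitivity_def using det_block[OF assms(2,3), of K] det_block[OF assms(2,4), of K] by simp

end
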